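(* Suppose we have $2$ agents with additive, identical, normalized valuations, provided with a prediction of accuracy $\eta<1-\frac{1-a}{\min\{2a(2+a),4\}}$ for some given $a\in(\varphi-1,1]$, where $\varphi=\frac{1+\sqrt5}{2}$; that is, the allowed error between the prediction and the true valuation is $D=1-\eta>\frac{1-a}{\min\{2a(2+a),4\}}$. Then there is no online algorithm that guarantees an $a$-EFX allocation for all instances with error at most $D$, even when $T'=T=4$ and the prediction and the true valuation are $4$-value functions.
   Context: Online fair division with predictions and identical valuations: goods $g_1,\dots,g_T$ arrive one per time step; all agents share a true additive normalized valuation $v$ ($v(g_t)\ge0$, $\sum_{t\in[T]}v(g_t)=1$, $v(S)=\sum_{g\in S}v(g)$), and before any arrival the algorithm receives a prediction $p=(p(g_1),\dots,p(g_{T'}))$ (an additive normalized valuation over $T'$ predicted goods) and the accuracy level. Error $D'=\frac12\sum_{t=1}^{\max\{T,T'\}}|p(g_t)-v(g_t)|$ (missing entries set to $0$); accuracy $\eta$ means the error is at most $1-\eta$. At time $t$, $v(g_t)$ is revealed and $g_t$ must be irrevocably allocated. For $S\ne\emptyset$, $\bar S=S\setminus\{g\}$ with $g\in\arg\max_{g'\in S}v(S\setminus\{g'\})$, $\bar\emptyset=\emptyset$. An allocation is $a$-EFX if $v(A_i)\ge a\cdot v(\bar A_j)$ for all $i,j$. A function is $k$-value if it takes at most $k$ distinct values. *)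

theory Defs
  imports Complex_Main
begin

text \<open>Goods are indexed 0,...,T-1. A valuation is a function nat => real, only
its values on {..<T} matter.\<close>

definition normalized_val :: "nat \<Rightarrow> (nat \<Rightarrow> real) \<Rightarrow> bool" where
  "normalized_val T v \<longleftrightarrow> (\<forall>t<T. 0 \<le> v t) \<and> (\<Sum>t<T. v t) = 1"

definition k_value :: "nat \<Rightarrow> nat \<Rightarrow> (nat \<Rightarrow> real) \<Rightarrow> bool" where
  "k_value k T v \<longleftrightarrow> card (v ` {..<T}) \<le> k"

text \<open>Prediction error D' for T = T' (no missing entries).\<close>
definition pred_error :: "nat \<Rightarrow> (nat \<Rightarrow> real) \<Rightarrow> (nat \<Rightarrow> real) \<Rightarrow> real" where
  "pred_error T p v = (1/2) * (\<Sum>t<T. \<bar>p t - v t\<bar>)"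

definition setv :: "(nat \<Rightarrow> real) \<Rightarrow> nat set \<Rightarrow> real" where
  "setv v S = (\<Sum>g\<in>S. v g)"

definition bar :: "(nat \<Rightarrow> real) \<Rightarrow> nat set \<Rightarrow> nat set" where
  "bar v S = (if S = {} then {} else
     S - {SOME g. g \<in> S \<and> (\<forall>g'\<in>S. setv v (S - {g'}) \<le> setv v (S - {g}))})"

definition a_EFX :: "real \<Rightarrow> (nat \<Rightarrow> real) \<Rightarrow> 'ag set \<Rightarrow> ('ag \<Rightarrow> nat set) \<Rightarrow> bool" where
  "a_EFX a v Ag A \<longleftrightarrow> (\<forall>i\<in>Ag. \<forall>j\<in>Ag. setv v (A i) \<ge> a * setv v (bar v (A j)))"

text \<open>A deterministic online algorithm for two agents (True/False), given the
prediction p and, at time t, the revealed values [v g_0, ..., v g_t], chooses the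
agent receiving g_t.\<close>
definition online_bundle ::
  "((nat \<Rightarrow> real) \<Rightarrow> real list \<Rightarrow> bool) \<Rightarrow> nat \<Rightarrow> (nat \<Rightarrow> real) \<Rightarrow> (nat \<Rightarrow> real) \<Rightarrow> bool \<Rightarrow> nat set" where
  "online_bundle alg T p v i = {t. t < T \<and> alg p (map v [0..<Suc t]) = i}"

definition golden_ratio :: real where
  "golden_ratio = (1 + sqrt 5) / 2"

end

theory Submission
  imports Defs
begin

lemma a_facts:
  fixes a :: real
  assumes "golden_ratio - 1 < a"
  shows "a*a + a > 1" "a > 1/2"
proof -
  have s5: "sqrt 5 > 2" by (simp add: real_less_rsqrt)
  have "2*a + 1 > sqrt 5" using assms unfolding golden_ratio_def by simp
  hence "(2*a+1)^2 > (sqrt 5)^2" using s5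
    by (smt (verit) power_strict_mono real_sqrt_ge_zero zero_less_numeral pos2)
  hence "(2*a+1)^2 > 5" by simp
  thus "a*a + a > 1" by (simp add: power2_eq_square algebra_simps)
  show "a > 1/2" using \<open>2*a + 1 > sqrt 5\<close> s5 by simp
qed

lemma params:
  fixes a D :: real
  assumes "golden_ratio - 1 < a" and "a \<le> 1"
    and "D > (1 - a) / min (2 * a * (2 + a)) 4"
  shows "\<exists>w \<eta>. 0 < \<eta> \<and> 1 + (2+a)*\<eta> < a*(a+2)*w \<and> 1 - 2*w < (3+a)*\<eta> \<and>
     (1+a)*w \<le> 1 \<and> \<eta> \<le> a*w \<and> 3*\<eta> \<le> (2*a-1)*w \<and> (1-a)*w/2 + \<eta> \<le> D"
proof -
  note af = a_facts[OF assms(1)]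
  show ?thesis
  proof (cases "a = 1")
    case True
    hence D0: "D > 0" using assms(3) by simp
    define \<eta> where "\<eta> = min D (1/10) / 2"
    have "0 < \<eta>" "\<eta> \<le> 1/20" "\<eta> \<le> D" using D0 by (auto simp: \<eta>_def)
    thus ?thesis using True by (intro exI[of _ "1/2"] exI[of _ \<eta>]) auto
  next
    case False
    hence a1: "a < 1" using assms(2) by simp
    show ?thesis
    proof (cases "a*(a+2) \<ge> 2")
      case True
      have m: "min (2 * a * (2 + a)) 4 = 4" using True by (simp add: algebra_simps)
      have th: "D - (1-a)/4 > 0" using assms(3) m by simp
      have g1: "(1-a)/(2*(1+a)) > 0" using a1 af by simp
      have g2: "(2*a-1)/3 > 0" using af by simp
      obtain r1 where r1: "0 < r1" "r1 < (1-a)/(2*(1+a))" "r1 < (2*a-1)/3"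
        using field_lbound_gt_zero[OF g1 g2] by auto
      obtain \<rho> where r0: "0 < \<rho>" "\<rho> < r1" "\<rho> < D - (1-a)/4"
        using field_lbound_gt_zero[OF r1(1) th] by auto
      have r: "0 < \<rho>" "\<rho> < (1-a)/(2*(1+a))" "\<rho> < (2*a-1)/3" "\<rho> < D - (1-a)/4"
        using r0 r1 by auto
      define w where "w = 1/2 + \<rho>"
      define \<eta> where "\<eta> = a*\<rho>/4"
      have ap: "a > 0" using af by simp
      have e0: "0 < \<eta>" using r ap by (simp add: \<eta>_def)
      have "a*(a+2)*w = a*(a+2)/2 + a*(a+2)*\<rho>" by (simp add: w_def algebra_simps)
      moreover have "(2+a)*\<eta> < a*(a+2)*\<rho>"
      proof -
        have pos: "a*(a+2)*\<rho> > 0" using ap r by simp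
        have "(2+a)*\<eta> = a*(a+2)*\<rho>/4" by (simp add: \<eta>_def algebra_simps)
        thus ?thesis using pos by linarith
      qed
      ultimately have c1: "1 + (2+a)*\<eta> < a*(a+2)*w" using True by simp
      have c2: "1 - 2*w < (3+a)*\<eta>" using e0 ap r by (simp add: w_def) (smt (verit) mult_pos_pos)
      have "(1+a)*\<rho> < (1-a)/2" using r(2) ap by (simp add: field_simps)
      moreover have "(1+a)*w = (1+a)/2 + (1+a)*\<rho>" by (simp add: w_def algebra_simps)
      ultimately have c3: "(1+a)*w \<le> 1" by (simp add: field_simps)
      have c4: "\<eta> \<le> a*w" using r ap by (simp add: \<eta>_def w_def algebra_simps)
      have "3*\<eta> \<le> 3*\<rho>/4" using r a1 by (simp add: \<eta>_def)
      also have "\<dots> \<le> (2*a-1)/2" using r by simp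
      also have "\<dots> \<le> (2*a-1)*w"
        using mult_left_mono[of "1/2" w "2*a-1"] r af by (simp add: w_def)
      finally have c5: "3*\<eta> \<le> (2*a-1)*w" .
      have "(1-a)*w/2 + \<eta> = (1-a)/4 + \<rho>*((1-a)/2 + a/4)"
        by (simp add: w_def \<eta>_def field_simps)
      also have "\<dots> \<le> (1-a)/4 + \<rho>"
      proof -
        have "(1-a)/2 + a/4 \<le> 1" using ap by (simp add: field_simps)
        hence "\<rho>*((1-a)/2 + a/4) \<le> \<rho>*1" using r(1) by (intro mult_left_mono) auto
        thus ?thesis by simp
      qed
      finally have c6: "(1-a)*w/2 + \<eta> \<le> D" using r by simp
      show ?thesis using e0 c1 c2 c3 c4 c5 c6 by blast
    next
      case False
      have ap: "a > 0" using af by simp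
      have m: "min (2 * a * (2 + a)) 4 = 2*a*(2+a)" using False by (simp add: algebra_simps)
      define w0 where "w0 = 1/(a*(a+2))"
      have aa: "a*(a+2) > 0" using ap by simp
      have w0e: "a*(a+2)*w0 = 1" using aa ap by (simp add: w0_def)
      have w0h: "w0 > 1/2" using False aa ap by (simp add: w0_def field_simps)
      have "(1-a)*w0/2 = (1-a)/(2*a*(2+a))" using ap by (simp add: w0_def field_simps)
      moreover have "(1-a)/min (2*a*(2+a)) 4 = (1-a)/(2*a*(2+a))" using m by simp
      ultimately have th: "D - (1-a)*w0/2 > 0" using assms(3) by linarith
      have "(1+a)*w0 < 1" using af aa ap by (simp add: w0_def field_simps algebra_simps)
      hence g1: "(1-(1+a)*w0)/(1+a) > 0" using ap by simp
      have g2: "(2*a-1)/3 > 0" using af by simp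
      obtain r1 where r1: "0 < r1" "r1 < (1-(1+a)*w0)/(1+a)" "r1 < (2*a-1)/3"
        using field_lbound_gt_zero[OF g1 g2] by auto
      obtain \<rho> where r0: "0 < \<rho>" "\<rho> < r1" "\<rho> < D - (1-a)*w0/2"
        using field_lbound_gt_zero[OF r1(1) th] by auto
      have r: "0 < \<rho>" "\<rho> < (1-(1+a)*w0)/(1+a)" "\<rho> < (2*a-1)/3" "\<rho> < D - (1-a)*w0/2"
        using r0 r1 by auto
      define w where "w = w0 + \<rho>"
      define \<eta> where "\<eta> = a*\<rho>/4"
      have e0: "0 < \<eta>" using r ap by (simp add: \<eta>_def)
      have "a*(a+2)*w = 1 + a*(a+2)*\<rho>" using w0e by (simp add: w_def algebra_simps)
      moreover have "(2+a)*\<eta> < a*(a+2)*\<rho>"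
      proof -
        have pos: "a*(a+2)*\<rho> > 0" using ap r by simp
        have "(2+a)*\<eta> = a*(a+2)*\<rho>/4" by (simp add: \<eta>_def algebra_simps)
        thus ?thesis using pos by linarith
      qed
      ultimately have c1: "1 + (2+a)*\<eta> < a*(a+2)*w" by simp
      have c2: "1 - 2*w < (3+a)*\<eta>" using e0 ap r w0h by (simp add: w_def) (smt (verit) mult_pos_pos)
      have "(1+a)*\<rho> < 1-(1+a)*w0" using r(2) ap by (simp add: field_simps)
      moreover have "(1+a)*w = (1+a)*w0 + (1+a)*\<rho>" by (simp add: w_def algebra_simps)
      ultimately have c3: "(1+a)*w \<le> 1" by (simp add: field_simps)
      have c4: "\<eta> \<le> a*w" using r ap w0h by (simp add: \<eta>_def w_def algebra_simps)
      have "3*\<eta> \<le> 3*\<rho>/4" using r a1 by (simp add: \<eta>_def)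
      also have "\<dots> \<le> (2*a-1)/2" using r by simp
      also have "\<dots> \<le> (2*a-1)*w"
        using mult_left_mono[of "1/2" w "2*a-1"] r af w0h by (simp add: w_def)
      finally have c5: "3*\<eta> \<le> (2*a-1)*w" .
      have "(1-a)*w/2 + \<eta> = (1-a)*w0/2 + \<rho>*((1-a)/2 + a/4)"
        by (simp add: w_def \<eta>_def field_simps)
      also have "\<dots> \<le> (1-a)*w0/2 + \<rho>"
      proof -
        have "(1-a)/2 + a/4 \<le> 1" using ap by (simp add: field_simps)
        hence "\<rho>*((1-a)/2 + a/4) \<le> \<rho>*1" using r(1) by (intro mult_left_mono) auto
        thus ?thesis by simp
      qed
      finally have c6: "(1-a)*w/2 + \<eta> \<le> D" using r by simp
      show ?thesis using e0 c1 c2 c3 c4 c5 c6 by blast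
    qed
  qed
qed


lemma sum4: "(\<Sum>t<4. f t) = f 0 + f 1 + f 2 + f (3::nat)"
  by (simp add: eval_nat_numeral)

lemma bar_ge:
  assumes "finite S" "g \<in> S"
  shows "setv v (S - {g}) \<le> setv v (bar v S)"
proof -
  let ?f = "\<lambda>g. setv v (S - {g})"
  have ne: "S \<noteq> {}" using assms by auto
  have fin: "finite (?f ` S)" using assms by simp
  have "Max (?f ` S) \<in> ?f ` S" using fin ne by (intro Max_in) auto
  then obtain g0 where g0: "g0 \<in> S" "?f g0 = Max (?f ` S)" by auto
  have "\<forall>g'\<in>S. ?f g' \<le> ?f g0" using g0 fin by auto
  hence ex: "\<exists>g. g \<in> S \<and> (\<forall>g'\<in>S. ?f g' \<le> ?f g)" using g0 by blast
  define g1 where "g1 = (SOME g. g \<in> S \<and> (\<forall>g'\<in>S. setv v (S - {g'}) \<le> setv v (S - {g})))"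
  have g1: "g1 \<in> S \<and> (\<forall>g'\<in>S. ?f g' \<le> ?f g1)" unfolding g1_def by (rule someI_ex[OF ex])
  have "bar v S = S - {g1}" using ne unfolding bar_def g1_def by simp
  thus ?thesis using g1 assms by simp
qed

lemma not_efx:
  fixes B :: "nat \<Rightarrow> bool"
  assumes "a > 0" "g < 4" "B g = j"
    and "(\<Sum>t<4. if B t = i then v t else 0) < a * ((\<Sum>t<4. if B t = j then v t else 0) - v g)"
  shows "\<not> a_EFX a v UNIV (\<lambda>k. {t. t < (4::nat) \<and> B t = k})"
proof
  assume h: "a_EFX a v UNIV (\<lambda>k. {t. t < (4::nat) \<and> B t = k})"
  have sv: "setv v {t. t < (4::nat) \<and> B t = k} = (\<Sum>t<4. if B t = k then v t else 0)" for k
  proof -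
    have e: "{t. t < (4::nat) \<and> B t = k} = {t \<in> {..<4}. B t = k}" by auto
    show ?thesis unfolding setv_def e by (rule sum.inter_filter) simp
  qed
  let ?A = "{t. t < (4::nat) \<and> B t = j}"
  have gA: "g \<in> ?A" using assms by simp
  have fA: "finite ?A" by simp
  have "setv v (?A - {g}) = setv v ?A - v g" using gA fA unfolding setv_def by (simp add: sum_diff1)
  hence "setv v (?A - {g}) = (\<Sum>t<4. if B t = j then v t else 0) - v g" using sv by simp
  moreover have "setv v (?A - {g}) \<le> setv v (bar v ?A)" using bar_ge[OF fA gA] .
  moreover have "a * setv v (bar v ?A) \<le> setv v {t. t < (4::nat) \<and> B t = i}"
    using h unfolding a_EFX_def by auto
  ultimately show False using assms(1,4) sv[of i]
    by (smt (verit) mult_left_mono)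
qed


lemma bundle_eq:
  "online_bundle alg 4 p v = (\<lambda>k. {t. t < (4::nat) \<and> (\<lambda>t. alg p (map v [0..<Suc t])) t = k})"
  by (rule ext) (simp add: online_bundle_def)

theorem theorem4p6:
  fixes a D :: real
  assumes "golden_ratio - 1 < a" and "a \<le> 1"
    and "D > (1 - a) / min (2 * a * (2 + a)) 4"
  shows "\<forall>alg :: (nat \<Rightarrow> real) \<Rightarrow> real list \<Rightarrow> bool.
           \<exists>p v :: nat \<Rightarrow> real.
             normalized_val 4 p \<and> normalized_val 4 v \<and>
             k_value 4 4 p \<and> k_value 4 4 v \<and>
             pred_error 4 p v \<le> D \<and>
             \<not> a_EFX a v UNIV (online_bundle alg 4 p v)"
proof (intro allI)
  fix alg :: "(nat \<Rightarrow> real) \<Rightarrow> real list \<Rightarrow> bool"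
  obtain w \<eta> where P: "0 < \<eta>" "1 + (2+a)*\<eta> < a*(a+2)*w" "1 - 2*w < (3+a)*\<eta>"
     "(1+a)*w \<le> 1" "\<eta> \<le> a*w" "3*\<eta> \<le> (2*a-1)*w" "(1-a)*w/2 + \<eta> \<le> D"
    using params[OF assms] by blast
  note af = a_facts[OF assms(1)]
  have ap: "a > 0" using af by simp
  define x where "x = 1 - (1+a)*w"
  define y where "y = (1-a)*w + 2*\<eta>"
  define c where "c = a*w - \<eta>"
  define c' where "c' = (2*a-1)*w - 3*\<eta>"
  define d' where "d' = w + \<eta>"
  have x0: "x \<ge> 0" using P by (simp add: x_def)
  have c0: "c \<ge> 0" using P by (simp add: c_def)
  have c'0: "c' \<ge> 0" using P by (simp add: c'_def)
  have w0: "w > 0"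
  proof (rule ccontr)
    assume "\<not> w > 0"
    hence "a*(a+2)*w \<le> 0" using ap by (simp add: mult_nonneg_nonpos)
    moreover have "(2+a)*\<eta> > 0" using P(1) ap by simp
    ultimately show False using P(2) by linarith
  qed
  have aw: "(1-a)*w \<ge> 0" using w0 assms(2) by (intro mult_nonneg_nonneg) auto
  have y0: "y > 0" using P(1) aw by (simp add: y_def)
  have d'0: "d' \<ge> 0" using P w0 by (simp add: d'_def)
  have sS: "x + y + c + c = 1" by (simp add: x_def y_def c_def algebra_simps)
  have sP: "x + y + c' + d' = 1" by (simp add: x_def y_def c'_def d'_def algebra_simps)
  have gap: "c - c' = (1-a)*w + 2*\<eta>" "d' - c = (1-a)*w + 2*\<eta>"
    by (simp_all add: c_def c'_def d'_def algebra_simps)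
  have gap0: "(1-a)*w + 2*\<eta> \<ge> 0" using P(1) aw by simp
  have A1: "c < a*(y+c)"
  proof -
    have "a*(y+c) - c = (1+a)*\<eta>" by (simp add: y_def c_def algebra_simps)
    moreover have "(1+a)*\<eta> > 0" using P(1) ap by simp
    ultimately show ?thesis by linarith
  qed
  have A3: "x + y < a*c"
  proof -
    have "a*c - (x+y) = a*(a+2)*w - (1 + (2+a)*\<eta>)" by (simp add: x_def y_def c_def algebra_simps)
    thus ?thesis using P(2) by linarith
  qed
  have A0: "0 < a*(y+c+c)" using ap y0 c0 by simp
  have Q1: "y + c' < a*d'"
  proof -
    have "a*d' - (y+c') = (1+a)*\<eta>" by (simp add: y_def c'_def d'_def algebra_simps)
    moreover have "(1+a)*\<eta> > 0" using P(1) ap by simp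
    ultimately show ?thesis by linarith
  qed
  have Q2: "x + c' < a*d'"
  proof -
    have "a*d' - (x+c') = (3+a)*\<eta> - (1 - 2*w)" by (simp add: x_def c'_def d'_def algebra_simps)
    thus ?thesis using P(3) by linarith
  qed
  have ac': "a*c' \<ge> 0" using ap c'0 by simp
  have "a*(c'+d') = a*c' + a*d'" by (simp add: algebra_simps)
  hence Q3: "y < a*(c'+d')" "x < a*(c'+d')" using Q1 Q2 ac' c'0 by linarith+
  define p where "p = (\<lambda>t::nat. if t = 0 then x else if t = 1 then y else if t = 2 then (c+c')/2
                        else if t = 3 then (c+d')/2 else 0)"
  define vS where "vS = (\<lambda>t::nat. if t = 0 then x else if t = 1 then y else if t = 2 then c
                        else if t = 3 then c else 0)"
  define vP where "vP = (\<lambda>t::nat. if t = 0 then x else if t = 1 then y else if t = 2 then c'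
                        else if t = 3 then d' else 0)"
  have np: "normalized_val 4 p"
  proof -
    have "\<forall>t<4. 0 \<le> p t" using x0 y0 c0 c'0 d'0 by (auto simp: p_def)
    moreover have "(\<Sum>t<4. p t) = 1" using sS sP by (simp add: sum4 p_def field_simps)
    ultimately show ?thesis by (simp add: normalized_val_def)
  qed
  have nS: "normalized_val 4 vS"
  proof -
    have "\<forall>t<4. 0 \<le> vS t" using x0 y0 c0 by (auto simp: vS_def)
    moreover have "(\<Sum>t<4. vS t) = 1" using sS by (simp add: sum4 vS_def)
    ultimately show ?thesis by (simp add: normalized_val_def)
  qed
  have nP: "normalized_val 4 vP"
  proof -
    have "\<forall>t<4. 0 \<le> vP t" using x0 y0 c'0 d'0 by (auto simp: vP_def)
    moreover have "(\<Sum>t<4. vP t) = 1" using sP by (simp add: sum4 vP_def)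
    ultimately show ?thesis by (simp add: normalized_val_def)
  qed
  have kv: "k_value 4 4 f" for f :: "nat \<Rightarrow> real"
    unfolding k_value_def using card_image_le[of "{..<4::nat}" f] by simp
  have eS: "pred_error 4 p vS \<le> D"
  proof -
    have "pred_error 4 p vS = (1/2) * (\<bar>(c+c')/2 - c\<bar> + \<bar>(c+d')/2 - c\<bar>)"
      by (simp add: pred_error_def sum4 p_def vS_def)
    also have "\<dots> = (1-a)*w/2 + \<eta>"
    proof -
      have h1: "(c+c')/2 - c = -(((1-a)*w + 2*\<eta>)/2)" using gap(1) by (simp add: field_simps)
      have h2: "(c+d')/2 - c = ((1-a)*w + 2*\<eta>)/2" using gap(2) by (simp add: field_simps)
      show ?thesis unfolding h1 h2 using gap0 by (simp add: field_simps)
    qed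
    finally show ?thesis using P(7) by simp
  qed
  have eP: "pred_error 4 p vP \<le> D"
  proof -
    have "pred_error 4 p vP = (1/2) * (\<bar>(c+c')/2 - c'\<bar> + \<bar>(c+d')/2 - d'\<bar>)"
      by (simp add: pred_error_def sum4 p_def vP_def)
    also have "\<dots> = (1-a)*w/2 + \<eta>"
    proof -
      have h1: "(c+c')/2 - c' = ((1-a)*w + 2*\<eta>)/2" using gap(1) by (simp add: field_simps)
      have h2: "(c+d')/2 - d' = -(((1-a)*w + 2*\<eta>)/2)" using gap(2) by (simp add: field_simps)
      show ?thesis unfolding h1 h2 using gap0 by (simp add: field_simps)
    qed
    finally show ?thesis using P(7) by simp
  qed
  show "\<exists>p v :: nat \<Rightarrow> real.
             normalized_val 4 p \<and> normalized_val 4 v \<and>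
             k_value 4 4 p \<and> k_value 4 4 v \<and>
             pred_error 4 p v \<le> D \<and>
             \<not> a_EFX a v UNIV (online_bundle alg 4 p v)"
  proof (cases "alg p [x] = alg p [x, y]")
    case True
    define B where "B = (\<lambda>t. alg p (map vS [0..<Suc t]))"
    have B0: "B 0 = alg p [x]" by (simp add: B_def vS_def)
    have B1: "B 1 = alg p [x]" using True by (simp add: B_def vS_def)
    define b where "b = alg p [x]"
    have "\<not> a_EFX a vS UNIV (\<lambda>k. {t. t < (4::nat) \<and> B t = k})"
    proof (cases "B 2 = b")
      case T2: True
      show ?thesis
      proof (cases "B 3 = b")
        case True
        show ?thesis
          by (rule not_efx[of a 0 B b "\<not> b"]) (use ap A0 B0 B1 T2 True in \<open>simp_all add: sum4 vS_def b_def\<close>)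
      next
        case False
        show ?thesis
          by (rule not_efx[of a 0 B b "\<not> b"]) (use ap A1 B0 B1 T2 False in \<open>simp_all add: sum4 vS_def b_def\<close>)
      qed
    next
      case F2: False
      show ?thesis
      proof (cases "B 3 = b")
        case True
        show ?thesis
          by (rule not_efx[of a 0 B b "\<not> b"]) (use ap A1 B0 B1 F2 True in \<open>simp_all add: sum4 vS_def b_def\<close>)
      next
        case False
        show ?thesis
          by (rule not_efx[of a 2 B "\<not> b" b]) (use ap A3 B0 B1 F2 False in \<open>simp_all add: sum4 vS_def b_def\<close>)
      qed
    qed
    hence "\<not> a_EFX a vS UNIV (online_bundle alg 4 p vS)" unfolding bundle_eq B_def .
    thus ?thesis using np nS kv eS by blast
  next
    case False
    define B where "B = (\<lambda>t. alg p (map vP [0..<Suc t]))"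
    define b where "b = alg p [x]"
    have B0: "B 0 = b" by (simp add: B_def vP_def b_def)
    have B1: "B 1 = (\<not> b)" using False by (simp add: B_def vP_def b_def)
    have "\<not> a_EFX a vP UNIV (\<lambda>k. {t. t < (4::nat) \<and> B t = k})"
    proof (cases "B 2 = b")
      case T2: True
      show ?thesis
      proof (cases "B 3 = b")
        case True
        show ?thesis
          by (rule not_efx[of a 0 B b "\<not> b"]) (use ap Q3 B0 B1 T2 True in \<open>simp_all add: sum4 vP_def\<close>)
      next
        case False
        show ?thesis
          by (rule not_efx[of a 1 B "\<not> b" b]) (use ap Q2 B0 B1 T2 False in \<open>simp_all add: sum4 vP_def\<close>)
      qed
    next
      case F2: False
      show ?thesis
      proof (cases "B 3 = b")
        case True
        show ?thesis
          by (rule not_efx[of a 0 B b "\<not> b"]) (use ap Q1 B0 B1 F2 True in \<open>simp_all add: sum4 vP_def\<close>)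
      next
        case False
        show ?thesis
          by (rule not_efx[of a 1 B "\<not> b" b]) (use ap Q3 B0 B1 F2 False in \<open>simp_all add: sum4 vP_def\<close>)
      qed
    qed
    hence "\<not> a_EFX a vP UNIV (online_bundle alg 4 p vP)" unfolding bundle_eq B_def .
    thus ?thesis using np nP kv eP by blast
  qed
qed

end
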